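(* Let $M\le V$ be a subspace such that there is an $X\in\mathcal G$ with $M\le X$ and $\dim(X/M)=1$, and let $\mathcal G[M\rangle:=\{E\le V\mid M\le E \text{ and } \dim(E/M)=1\}$ (the star with centre $M$). Then: (1) $\mathcal G[M\rangle\subseteq\mathcal G$; (2) any two distinct elements $E,E'\in\mathcal G[M\rangle$ are adjacent; (3) two adjacent elements $E,E'\in\mathcal G$ both belong to $\mathcal G[M\rangle$ if and only if $E\cap E'=M$.
   Context: $K$ is a (not necessarily commutative) field and $V$ is a left vector space over $K$ of arbitrary (possibly infinite) dimension with $\dim V>2$. $\mathcal G:=\{X\le V\mid X\cong V/X\}$ is the set of subspaces of $V$ isomorphic (as $K$-vector spaces) to their quotient space, assumed nonempty. Dimensions are vector space dimensions. Two elements $X,Y\in\mathcal G$ are called adjacent if $\dim((X+Y)/X)=\dim((X+Y)/Y)=1$, equivalently $\dim(X/(X\cap Y))=\dim(Y/(X\cap Y))=1$. *)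

theory Defs
  imports Main
begin

text \<open>Left vector space over a (not necessarily commutative) field, i.e. a division ring.
  The whole type 'v plays the role of V.\<close>

locale left_vector_space =
  fixes scale :: "'k::division_ring \<Rightarrow> 'v::ab_group_add \<Rightarrow> 'v"
  assumes scale_right_distrib: "scale a (x + y) = scale a x + scale a y"
    and scale_left_distrib: "scale (a + b) x = scale a x + scale b x"
    and scale_scale: "scale a (scale b x) = scale (a * b) x"
    and scale_one: "scale 1 x = x"

definition subspace :: "('k::division_ring \<Rightarrow> 'v::ab_group_add \<Rightarrow> 'v) \<Rightarrow> 'v set \<Rightarrow> bool" where
  "subspace scale S \<longleftrightarrow> 0 \<in> S \<and> (\<forall>x\<in>S. \<forall>y\<in>S. x + y \<in> S) \<and> (\<forall>a. \<forall>x\<in>S. scale a x \<in> S)"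

definition lin_indep :: "('k::division_ring \<Rightarrow> 'v::ab_group_add \<Rightarrow> 'v) \<Rightarrow> 'v set \<Rightarrow> bool" where
  "lin_indep scale S \<longleftrightarrow> finite S \<and>
     (\<forall>c. (\<Sum>x\<in>S. scale (c x) x) = 0 \<longrightarrow> (\<forall>x\<in>S. c x = 0))"

definition dim_gt_2 :: "('k::division_ring \<Rightarrow> 'v::ab_group_add \<Rightarrow> 'v) \<Rightarrow> bool" where
  "dim_gt_2 scale \<longleftrightarrow> (\<exists>S. lin_indep scale S \<and> card S = 3)"

definition ssum :: "'v::ab_group_add set \<Rightarrow> 'v set \<Rightarrow> 'v set" where
  "ssum X Y = {x + y | x y. x \<in> X \<and> y \<in> Y}"

text \<open>dim(E/M) = 1 for subspaces M \<le> E: E/M is spanned by one nonzero coset v + M.\<close>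
definition quot_dim_one :: "('k::division_ring \<Rightarrow> 'v::ab_group_add \<Rightarrow> 'v) \<Rightarrow> 'v set \<Rightarrow> 'v set \<Rightarrow> bool" where
  "quot_dim_one scale E M \<longleftrightarrow> subspace scale M \<and> subspace scale E \<and> M \<subseteq> E \<and>
     (\<exists>v\<in>E. v \<notin> M \<and> E = {m + scale a v | m a. m \<in> M})"

text \<open>The quotient space V/X: its elements are the cosets v + X, with the
  (well-defined) operations (v+X)+(w+X) = (v+w)+X and a(v+X) = av+X.\<close>
definition coset :: "'v::ab_group_add set \<Rightarrow> 'v \<Rightarrow> 'v set" where
  "coset X v = {v + x | x. x \<in> X}"

definition quot :: "'v::ab_group_add set \<Rightarrow> 'v set set" where
  "quot X = range (coset X)"

definition iso_to_quot :: "('k::division_ring \<Rightarrow> 'v::ab_group_add \<Rightarrow> 'v) \<Rightarrow> 'v set \<Rightarrow> bool" where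
  "iso_to_quot scale X \<longleftrightarrow> (\<exists>f. bij_betw f X (quot X) \<and>
     (\<forall>x\<in>X. \<forall>y\<in>X. \<forall>v w. f x = coset X v \<longrightarrow> f y = coset X w \<longrightarrow> f (x + y) = coset X (v + w)) \<and>
     (\<forall>x\<in>X. \<forall>a v. f x = coset X v \<longrightarrow> f (scale a x) = coset X (scale a v)))"

definition Gr :: "('k::division_ring \<Rightarrow> 'v::ab_group_add \<Rightarrow> 'v) \<Rightarrow> 'v set set" where
  "Gr scale = {X. subspace scale X \<and> iso_to_quot scale X}"

definition adjacent :: "('k::division_ring \<Rightarrow> 'v::ab_group_add \<Rightarrow> 'v) \<Rightarrow> 'v set \<Rightarrow> 'v set \<Rightarrow> bool" where
  "adjacent scale X Y \<longleftrightarrow> quot_dim_one scale (ssum X Y) X \<and> quot_dim_one scale (ssum X Y) Y"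

definition star :: "('k::division_ring \<Rightarrow> 'v::ab_group_add \<Rightarrow> 'v) \<Rightarrow> 'v set \<Rightarrow> 'v set set" where
  "star scale M = {E. subspace scale E \<and> M \<subseteq> E \<and> quot_dim_one scale E M}"

end

theory Submission
  imports Defs
begin

context left_vector_space begin

lemma scale_zero_left[simp]: "scale 0 x = 0"
proof -
  have "scale (0+0) x = scale 0 x + scale 0 x" by (rule scale_left_distrib)
  then show ?thesis by simp
qed

lemma scale_zero_right[simp]: "scale a 0 = 0"
proof -
  have "scale a (0+0) = scale a 0 + scale a 0" by (rule scale_right_distrib)
  then show ?thesis by simp
qed

lemma scale_minus_left: "scale (-a) x = - scale a x"
proof -
  have "scale (-a + a) x = scale (-a) x + scale a x" by (rule scale_left_distrib)
  then show ?thesis by (simp add: eq_neg_iff_add_eq_0)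
qed

lemma scale_minus_right: "scale a (-x) = - scale a x"
proof -
  have "scale a (-x + x) = scale a (-x) + scale a x" by (rule scale_right_distrib)
  then show ?thesis by (simp add: eq_neg_iff_add_eq_0)
qed

lemma scale_diff_right: "scale a (x - y) = scale a x - scale a y"
  using scale_right_distrib[of a x "-y"] by (simp add: scale_minus_right)

lemma scale_diff_left: "scale (a - b) x = scale a x - scale b x"
  using scale_left_distrib[of a "-b" x] by (simp add: scale_minus_left)

lemma sub0: "subspace scale S \<Longrightarrow> 0 \<in> S" by (simp add: subspace_def)
lemma subadd: "subspace scale S \<Longrightarrow> x \<in> S \<Longrightarrow> y \<in> S \<Longrightarrow> x + y \<in> S" by (simp add: subspace_def)
lemma subscale: "subspace scale S \<Longrightarrow> x \<in> S \<Longrightarrow> scale a x \<in> S" by (simp add: subspace_def)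
lemma subneg: "subspace scale S \<Longrightarrow> x \<in> S \<Longrightarrow> -x \<in> S"
  using subscale[of S x "-1"] by (simp add: scale_minus_left scale_one)
lemma subdiff: "subspace scale S \<Longrightarrow> x \<in> S \<Longrightarrow> y \<in> S \<Longrightarrow> x - y \<in> S"
  using subadd[of S x "-y"] subneg[of S y] by simp

lemma inv_scale: "a \<noteq> 0 \<Longrightarrow> scale (inverse a) (scale a v) = v"
  by (simp add: scale_scale scale_one)

lemma qdo_gen:
  assumes q: "quot_dim_one scale E M" and S: "subspace scale S" "M \<subseteq> S"
    and s: "s \<in> S" "s \<in> E" "s \<notin> M"
  shows "E \<subseteq> S"
proof -
  from q obtain v where v: "v \<in> E" "v \<notin> M" "E = {m + scale a v | m a. m \<in> M}"
    and M: "subspace scale M" unfolding quot_dim_one_def by blast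
  from s(2) v(3) obtain m a where ma: "m \<in> M" "s = m + scale a v" by blast
  have a: "a \<noteq> 0" using ma s(3) by auto
  have "m \<in> S" using ma S(2) by blast
  then have "s - m \<in> S" using subdiff[OF S(1) s(1)] by blast
  then have "scale (inverse a) (s - m) \<in> S" using subscale[OF S(1)] by blast
  moreover have "scale (inverse a) (s - m) = v" using ma a inv_scale by simp
  ultimately have vS: "v \<in> S" by simp
  show ?thesis
  proof
    fix u assume "u \<in> E"
    then obtain m' b where "m' \<in> M" "u = m' + scale b v" using v(3) by blast
    then show "u \<in> S" using S vS subadd subscale by blast
  qed
qed

lemma qdo_sub:
  assumes "quot_dim_one scale E M" "quot_dim_one scale E' M" "E' \<subseteq> E"
  shows "E' = E"
proof -
  from assms(2) obtain w where "w \<in> E'" "w \<notin> M" and "subspace scale E'" "M \<subseteq> E'"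
    unfolding quot_dim_one_def by blast
  then have "E \<subseteq> E'" using qdo_gen[OF assms(1)] assms(3) by blast
  then show ?thesis using assms(3) by blast
qed

lemma qdo_between:
  assumes "quot_dim_one scale E M" "subspace scale S" "M \<subseteq> S" "S \<subseteq> E"
  shows "S = M \<or> S = E"
proof (cases "S \<subseteq> M")
  case True then show ?thesis using assms by blast
next
  case False
  then obtain s where "s \<in> S" "s \<notin> M" by blast
  then have "E \<subseteq> S" using qdo_gen[OF assms(1-3)] assms(4) by blast
  then show ?thesis using assms by blast
qed

lemma ssum_sub:
  assumes "subspace scale A" "subspace scale B"
  shows "subspace scale (ssum A B)"
  unfolding subspace_def ssum_def
proof (intro conjI ballI allI)
  show "0 \<in> {x + y |x y. x \<in> A \<and> y \<in> B}" using sub0[OF assms(1)] sub0[OF assms(2)] by force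
next
  fix u w assume "u \<in> {x + y |x y. x \<in> A \<and> y \<in> B}" "w \<in> {x + y |x y. x \<in> A \<and> y \<in> B}"
  then obtain x y x' y' where "x \<in> A" "y \<in> B" "x' \<in> A" "y' \<in> B" "u = x + y" "w = x' + y'" by blast
  then show "u + w \<in> {x + y |x y. x \<in> A \<and> y \<in> B}"
    using subadd[OF assms(1)] subadd[OF assms(2)]
    by (intro CollectI exI[of _ "x + x'"] exI[of _ "y + y'"]) (simp add: algebra_simps)
next
  fix a u assume "u \<in> {x + y |x y. x \<in> A \<and> y \<in> B}"
  then obtain x y where "x \<in> A" "y \<in> B" "u = x + y" by blast
  then show "scale a u \<in> {x + y |x y. x \<in> A \<and> y \<in> B}"
    using subscale[OF assms(1)] subscale[OF assms(2)] scale_right_distrib by blast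
qed

end

context left_vector_space begin

lemma ssum_comm: "ssum A B = ssum B A"
  unfolding ssum_def by (auto simp: add.commute) (metis add.commute)+

lemma star_adj_half:
  assumes E: "quot_dim_one scale E M" and E': "quot_dim_one scale E' M" and ne: "E \<noteq> E'"
  shows "quot_dim_one scale (ssum E E') E"
proof -
  from E' obtain w where w: "w \<in> E'" "w \<notin> M" "E' = {m + scale a w | m a. m \<in> M}"
    and M: "subspace scale M" and sE': "subspace scale E'" and ME': "M \<subseteq> E'"
    unfolding quot_dim_one_def by blast
  from E have sE: "subspace scale E" and ME: "M \<subseteq> E" unfolding quot_dim_one_def by auto
  have wE: "w \<notin> E"
  proof
    assume "w \<in> E"
    then have "E' \<subseteq> E" using qdo_gen[OF E' sE ME] w by blast
    then show False using qdo_sub[OF E E'] ne by blast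
  qed
  have eq: "ssum E E' = {m + scale a w | m a. m \<in> E}"
  proof
    show "ssum E E' \<subseteq> {m + scale a w | m a. m \<in> E}"
    proof
      fix u assume "u \<in> ssum E E'"
      then obtain x y where xy: "x \<in> E" "y \<in> E'" "u = x + y" unfolding ssum_def by blast
      then obtain m a where "m \<in> M" "y = m + scale a w" using w(3) by blast
      then have "u = (x + m) + scale a w" "x + m \<in> E" using xy ME subadd[OF sE] by (auto simp: add.assoc)
      then show "u \<in> {m + scale a w | m a. m \<in> E}" by blast
    qed
  next
    show "{m + scale a w | m a. m \<in> E} \<subseteq> ssum E E'"
      unfolding ssum_def using subscale[OF sE' w(1)] by blast
  qed
  show ?thesis unfolding quot_dim_one_def
  proof (intro conjI)
    show "subspace scale (ssum E E')" using ssum_sub sE sE' by blast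
    show "E \<subseteq> ssum E E'" unfolding ssum_def using sub0[OF sE'] by force
    have "w \<in> ssum E E'" unfolding ssum_def using sub0[OF sE] w(1) by force
    then show "\<exists>v\<in>ssum E E'. v \<notin> E \<and> ssum E E' = {m + scale a v |m a. m \<in> E}"
      using wE eq by blast
  qed (use sE in auto)
qed

lemma star_adj:
  assumes "E \<in> star scale M" "E' \<in> star scale M" "E \<noteq> E'"
  shows "adjacent scale E E'"
  using assms star_adj_half[of E M E'] star_adj_half[of E' M E] ssum_comm[of E E']
  unfolding adjacent_def star_def by auto

lemma adj_ne:
  assumes "subspace scale E" "quot_dim_one scale (ssum E E') E" "E = E'"
  shows False
proof -
  from assms(2) obtain v where v: "v \<in> ssum E E'" "v \<notin> E" unfolding quot_dim_one_def by blast
  then obtain x y where "x \<in> E" "y \<in> E" "v = x + y" using assms(3) unfolding ssum_def by blast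
  then show False using v subadd[OF assms(1)] by blast
qed

lemma half3:
  assumes q: "quot_dim_one scale (ssum A B) B" and sA: "subspace scale A" and sB: "subspace scale B"
    and M: "subspace scale M" and I: "A \<inter> B = M"
  shows "quot_dim_one scale A M"
proof -
  from q obtain w where w: "w \<in> ssum A B" "w \<notin> B" "ssum A B = {m + scale a w | m a. m \<in> B}"
    unfolding quot_dim_one_def by blast
  then obtain x y where xy: "x \<in> A" "y \<in> B" "w = x + y" unfolding ssum_def by blast
  have xB: "x \<notin> B" using xy w(2) subadd[OF sB, of x y] by blast
  have eq: "A = {m + scale a x | m a. m \<in> M}"
  proof
    show "A \<subseteq> {m + scale a x | m a. m \<in> M}"
    proof
      fix u assume u: "u \<in> A"
      have "u \<in> ssum A B" unfolding ssum_def using u sub0[OF sB] by force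
      then obtain m a where ma: "m \<in> B" "u = m + scale a w" using w(3) by blast
      have "u - scale a x = m + scale a y" using ma xy scale_right_distrib by simp
      moreover have "m + scale a y \<in> B" using ma xy subadd[OF sB] subscale[OF sB] by blast
      ultimately have "u - scale a x \<in> B" by simp
      moreover have "u - scale a x \<in> A" using u xy subdiff[OF sA] subscale[OF sA] by blast
      ultimately have "u - scale a x \<in> M" using I by blast
      moreover have "u = (u - scale a x) + scale a x" by simp
      ultimately show "u \<in> {m + scale a x | m a. m \<in> M}" by blast
    qed
  next
    show "{m + scale a x | m a. m \<in> M} \<subseteq> A"
      using I xy subadd[OF sA] subscale[OF sA] by blast
  qed
  show ?thesis unfolding quot_dim_one_def
    using M sA I xy xB eq by blast
qed

lemma part3:
  assumes sE: "subspace scale E" and sE': "subspace scale E'" and M: "subspace scale M"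
    and adj: "adjacent scale E E'"
  shows "(E \<in> star scale M \<and> E' \<in> star scale M) \<longleftrightarrow> E \<inter> E' = M"
proof
  assume st: "E \<in> star scale M \<and> E' \<in> star scale M"
  have ne: "E \<noteq> E'" using adj_ne[OF sE] adj unfolding adjacent_def by blast
  have qE: "quot_dim_one scale E M" and qE': "quot_dim_one scale E' M" and ME: "M \<subseteq> E" "M \<subseteq> E'"
    using st unfolding star_def by auto
  have sI: "subspace scale (E \<inter> E')" using sE sE' unfolding subspace_def by blast
  from qdo_between[OF qE sI] ME have "E \<inter> E' = M \<or> E \<inter> E' = E" by blast
  moreover have "E \<inter> E' \<noteq> E"
  proof
    assume "E \<inter> E' = E"
    then have "E \<subseteq> E'" by blast
    then show False using qdo_sub[OF qE' qE] ne by blast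
  qed
  ultimately show "E \<inter> E' = M" by blast
next
  assume I: "E \<inter> E' = M"
  have "quot_dim_one scale E M" using half3[OF _ sE sE' M I] adj unfolding adjacent_def by blast
  moreover have "quot_dim_one scale E' M"
    using half3[OF _ sE' sE M] I adj ssum_comm[of E E'] unfolding adjacent_def by (metis Int_commute)
  ultimately show "E \<in> star scale M \<and> E' \<in> star scale M"
    unfolding star_def quot_dim_one_def by blast
qed

end

context left_vector_space begin

lemma line_sub:
  assumes "subspace scale S"
  shows "subspace scale {s + scale b v | s b. s \<in> S}"
  unfolding subspace_def
proof (intro conjI ballI allI)
  show "0 \<in> {s + scale b v | s b. s \<in> S}" using sub0[OF assms]
    by (intro CollectI exI[of _ 0] exI[of _ "0::'k"]) simp
next
  fix u w assume "u \<in> {s + scale b v | s b. s \<in> S}" "w \<in> {s + scale b v | s b. s \<in> S}"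
  then obtain s b s' b' where h: "s \<in> S" "s' \<in> S" "u = s + scale b v" "w = s' + scale b' v" by blast
  then have "u + w = (s + s') + scale (b + b') v" by (simp add: scale_left_distrib algebra_simps)
  then show "u + w \<in> {s + scale b v | s b. s \<in> S}" using subadd[OF assms h(1,2)] by blast
next
  fix c u assume "u \<in> {s + scale b v | s b. s \<in> S}"
  then obtain s b where h: "s \<in> S" "u = s + scale b v" by blast
  then have "scale c u = scale c s + scale (c * b) v" by (simp add: scale_right_distrib scale_scale)
  then show "scale c u \<in> {s + scale b v | s b. s \<in> S}" using subscale[OF assms h(1)] by blast
qed

lemma hyperplane_exists:
  assumes S0: "subspace scale S0" and x: "x \<notin> S0"
  shows "\<exists>S. subspace scale S \<and> S0 \<subseteq> S \<and> x \<notin> S \<and> (\<forall>v. \<exists>a. v - scale a x \<in> S)"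
proof -
  define A where "A = {S. subspace scale S \<and> S0 \<subseteq> S \<and> x \<notin> S}"
  have "\<forall>C\<in>chains A. \<exists>U\<in>A. \<forall>X\<in>C. X \<subseteq> U"
  proof
    fix C assume C: "C \<in> chains A"
    show "\<exists>U\<in>A. \<forall>X\<in>C. X \<subseteq> U"
    proof (cases "C = {}")
      case True then show ?thesis using S0 x unfolding A_def by blast
    next
      case False
      have CA: "C \<subseteq> A" using chainsD2[OF C] .
      have "subspace scale (\<Union>C)" unfolding subspace_def
      proof (intro conjI ballI allI)
        show "0 \<in> \<Union>C" using False CA unfolding A_def subspace_def by blast
      next
        fix u w assume "u \<in> \<Union>C" "w \<in> \<Union>C"
        then obtain S1 S2 where "S1 \<in> C" "S2 \<in> C" "u \<in> S1" "w \<in> S2" by blast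
        moreover from chainsD[OF C this(1,2)] have "S1 \<subseteq> S2 \<or> S2 \<subseteq> S1" .
        ultimately show "u + w \<in> \<Union>C" using CA unfolding A_def subspace_def by blast
      next
        fix a u assume "u \<in> \<Union>C"
        then show "scale a u \<in> \<Union>C" using CA unfolding A_def subspace_def by blast
      qed
      moreover have "S0 \<subseteq> \<Union>C" "x \<notin> \<Union>C" using False CA unfolding A_def by auto
      ultimately show ?thesis unfolding A_def by blast
    qed
  qed
  from Zorn_Lemma2[OF this] obtain S where SA: "S \<in> A" and max: "\<forall>X\<in>A. S \<subseteq> X \<longrightarrow> X = S" by blast
  have sS: "subspace scale S" and S0S: "S0 \<subseteq> S" and xS: "x \<notin> S" using SA unfolding A_def by auto
  have "\<exists>a. v - scale a x \<in> S" for v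
  proof (cases "v \<in> S")
    case True then show ?thesis by (intro exI[of _ 0]) simp
  next
    case False
    define S' where "S' = {s + scale b v | s b. s \<in> S}"
    have sS': "subspace scale S'" unfolding S'_def by (rule line_sub[OF sS])
    have SS': "S \<subseteq> S'" unfolding S'_def by (force intro: exI[of _ "0::'k"])
    have vS': "v \<in> S'" unfolding S'_def using sub0[OF sS]
      by (intro CollectI exI[of _ 0] exI[of _ "1::'k"]) (simp add: scale_one)
    have "x \<in> S'"
    proof (rule ccontr)
      assume "x \<notin> S'"
      then have "S' \<in> A" using sS' SS' S0S unfolding A_def by blast
      then have "S' = S" using max SS' by blast
      then show False using vS' False by blast
    qed
    then obtain s b where sb: "s \<in> S" "x = s + scale b v" unfolding S'_def by blast
    have b: "b \<noteq> 0" using sb xS by auto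
    have "scale (inverse b) x = scale (inverse b) s + v"
      using sb b by (simp add: scale_right_distrib inv_scale)
    then have "v - scale (inverse b) x = - scale (inverse b) s" by simp
    then show ?thesis using subneg[OF sS] subscale[OF sS sb(1)] by metis
  qed
  then show ?thesis using sS S0S xS by blast
qed

end

context left_vector_space begin

lemma coset_eq:
  assumes "subspace scale X"
  shows "coset X v = coset X w \<longleftrightarrow> v - w \<in> X"
proof
  assume h: "coset X v = coset X w"
  have "v \<in> coset X v" unfolding coset_def using sub0[OF assms] by force
  then obtain x where "x \<in> X" "v = w + x" using h unfolding coset_def by blast
  then show "v - w \<in> X" by simp
next
  assume h: "v - w \<in> X"
  show "coset X v = coset X w"
  proof
    show "coset X v \<subseteq> coset X w"
    proof
      fix u assume "u \<in> coset X v"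
      then obtain x where x: "x \<in> X" "u = v + x" unfolding coset_def by blast
      then have "u = w + ((v - w) + x)" "(v - w) + x \<in> X" using subadd[OF assms h] by auto
      then show "u \<in> coset X w" unfolding coset_def by blast
    qed
  next
    have h': "w - v \<in> X" using subneg[OF assms h] by simp
    show "coset X w \<subseteq> coset X v"
    proof
      fix u assume "u \<in> coset X w"
      then obtain x where x: "x \<in> X" "u = w + x" unfolding coset_def by blast
      then have "u = v + ((w - v) + x)" "(w - v) + x \<in> X" using subadd[OF assms h'] by auto
      then show "u \<in> coset X v" unfolding coset_def by blast
    qed
  qed
qed

lemma transfer:
  assumes sX: "subspace scale X" and sE: "subspace scale E"
    and add: "\<And>u w. \<phi> (u + w) = \<phi> u + \<phi> w"
    and hom: "\<And>a u. \<phi> (scale a u) = scale a (\<phi> u)"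
    and inv1: "\<And>u. \<psi> (\<phi> u) = u" and inv2: "\<And>u. \<phi> (\<psi> u) = u"
    and img: "\<phi> ` X = E" and iso: "iso_to_quot scale X"
  shows "iso_to_quot scale E"
proof -
  from iso obtain f where fb: "bij_betw f X (quot X)"
    and fadd: "\<forall>x\<in>X. \<forall>y\<in>X. \<forall>v w. f x = coset X v \<longrightarrow> f y = coset X w \<longrightarrow> f (x + y) = coset X (v + w)"
    and fsc: "\<forall>x\<in>X. \<forall>a v. f x = coset X v \<longrightarrow> f (scale a x) = coset X (scale a v)"
    unfolding iso_to_quot_def by blast
  have phidiff: "\<phi> (u - w) = \<phi> u - \<phi> w" for u w
    using add[of "u - w" w] by (simp add: eq_diff_eq)
  have psiadd: "\<psi> (u + w) = \<psi> u + \<psi> w" for u w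
    by (metis add inv1 inv2)
  have psihom: "\<psi> (scale a u) = scale a (\<psi> u)" for a u
    by (metis hom inv1 inv2)
  have psiE: "y \<in> E \<Longrightarrow> \<psi> y \<in> X" for y using img inv1 by auto
  have memX: "\<phi> u \<in> E \<Longrightarrow> u \<in> X" for u using img inv1 by (metis imageE)
  have phiX: "u \<in> X \<Longrightarrow> \<phi> u \<in> E" for u using img by blast
  have ex: "x \<in> X \<Longrightarrow> \<exists>v. f x = coset X v" for x
    using bij_betwE[OF fb] unfolding quot_def by blast
  define g where "g y = coset E (\<phi> (SOME v. f (\<psi> y) = coset X v))" for y
  have gchar: "g y = coset E (\<phi> v)" if "y \<in> E" "f (\<psi> y) = coset X v" for y v
  proof -
    have "\<exists>v. f (\<psi> y) = coset X v" using ex psiE that(1) by blast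
    then have "f (\<psi> y) = coset X (SOME v. f (\<psi> y) = coset X v)" by (rule someI_ex)
    then have "coset X (SOME v. f (\<psi> y) = coset X v) = coset X v" using that(2) by metis
    then have "(SOME v. f (\<psi> y) = coset X v) - v \<in> X" using coset_eq[OF sX] by blast
    then have "\<phi> (SOME v. f (\<psi> y) = coset X v) - \<phi> v \<in> E" using phiX phidiff by metis
    then show ?thesis unfolding g_def using coset_eq[OF sE] by blast
  qed
  have inj: "inj_on g E"
  proof
    fix y y' assume y: "y \<in> E" "y' \<in> E" "g y = g y'"
    obtain v where v: "f (\<psi> y) = coset X v" using ex psiE y(1) by blast
    obtain v' where v': "f (\<psi> y') = coset X v'" using ex psiE y(2) by blast
    have "coset E (\<phi> v) = coset E (\<phi> v')" using gchar v v' y by metis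
    then have "\<phi> (v - v') \<in> E" using coset_eq[OF sE] phidiff by metis
    then have "v - v' \<in> X" by (rule memX)
    then have "f (\<psi> y) = f (\<psi> y')" using v v' coset_eq[OF sX] by metis
    then have "\<psi> y = \<psi> y'" using bij_betw_imp_inj_on[OF fb] psiE y inj_on_def by metis
    then show "y = y'" using inv2 by metis
  qed
  have surj: "g ` E = quot E"
  proof
    show "g ` E \<subseteq> quot E" unfolding g_def quot_def by blast
  next
    show "quot E \<subseteq> g ` E"
    proof
      fix c assume "c \<in> quot E"
      then obtain w where w: "c = coset E w" unfolding quot_def by blast
      have "coset X (\<psi> w) \<in> f ` X" using bij_betw_imp_surj_on[OF fb] unfolding quot_def by blast
      then obtain x where x: "x \<in> X" "f x = coset X (\<psi> w)" by (metis imageE)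
      have "g (\<phi> x) = coset E (\<phi> (\<psi> w))" using gchar[of "\<phi> x" "\<psi> w"] x phiX inv1 by simp
      then show "c \<in> g ` E" using w inv2 phiX x(1) by (metis image_eqI)
    qed
  qed
  have gadd: "\<forall>x\<in>E. \<forall>y\<in>E. \<forall>v w. g x = coset E v \<longrightarrow> g y = coset E w \<longrightarrow> g (x + y) = coset E (v + w)"
  proof (intro ballI allI impI)
    fix y y' p q assume y: "y \<in> E" "y' \<in> E" and gp: "g y = coset E p" and gq: "g y' = coset E q"
    obtain v where v: "f (\<psi> y) = coset X v" using ex psiE y(1) by blast
    obtain v' where v': "f (\<psi> y') = coset X v'" using ex psiE y(2) by blast
    have "coset E (\<phi> v) = coset E p" using gchar[OF y(1) v] gp by simp
    then have d1: "\<phi> v - p \<in> E" using coset_eq[OF sE] by blast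
    have "coset E (\<phi> v') = coset E q" using gchar[OF y(2) v'] gq by simp
    then have d2: "\<phi> v' - q \<in> E" using coset_eq[OF sE] by blast
    have "f (\<psi> (y + y')) = coset X (v + v')" using fadd psiE y v v' psiadd by simp
    then have "g (y + y') = coset E (\<phi> (v + v'))" using gchar subadd[OF sE y] by blast
    moreover have eqq: "\<phi> (v + v') - (p + q) = (\<phi> v - p) + (\<phi> v' - q)" using add by (simp add: algebra_simps)
    have "\<phi> (v + v') - (p + q) \<in> E" unfolding eqq using subadd[OF sE d1 d2] .
    ultimately show "g (y + y') = coset E (p + q)" using coset_eq[OF sE] by simp
  qed
  have gsc: "\<forall>x\<in>E. \<forall>a v. g x = coset E v \<longrightarrow> g (scale a x) = coset E (scale a v)"
  proof (intro ballI allI impI)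
    fix y a p assume y: "y \<in> E" and gp: "g y = coset E p"
    obtain v where v: "f (\<psi> y) = coset X v" using ex psiE y(1) by blast
    have "coset E (\<phi> v) = coset E p" using gchar[OF y(1) v] gp by simp
    then have d1: "\<phi> v - p \<in> E" using coset_eq[OF sE] by blast
    have "f (\<psi> (scale a y)) = coset X (scale a v)" using fsc psiE y v psihom by simp
    then have "g (scale a y) = coset E (\<phi> (scale a v))" using gchar subscale[OF sE y] by blast
    moreover have "\<phi> (scale a v) - scale a p = scale a (\<phi> v - p)" using hom scale_diff_right by simp
    then have "\<phi> (scale a v) - scale a p \<in> E" using subscale[OF sE d1] by simp
    ultimately show "g (scale a y) = coset E (scale a p)" using coset_eq[OF sE] by simp
  qed
  show ?thesis unfolding iso_to_quot_def bij_betw_def using inj surj gadd gsc by blast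
qed

end

context left_vector_space begin

lemma aux_eq: "x = m + scale b (e - x) \<Longrightarrow> scale (1 + b) x = m + scale b e"
  by (simp add: scale_left_distrib scale_one scale_diff_right algebra_simps)

lemma star_in_Gr:
  assumes XG: "X \<in> Gr scale" and qX: "quot_dim_one scale X M" and qE: "quot_dim_one scale E M"
  shows "E \<in> Gr scale"
proof (cases "E = X")
  case True then show ?thesis using XG by simp
next
  case False
  from qX obtain x where x: "x \<in> X" "x \<notin> M" "X = {m + scale a x | m a. m \<in> M}"
    and sM: "subspace scale M" and sX: "subspace scale X" and MX: "M \<subseteq> X"
    unfolding quot_dim_one_def by blast
  from qE obtain e where e: "e \<in> E" "e \<notin> M" "E = {m + scale a e | m a. m \<in> M}"
    and sE: "subspace scale E" and ME: "M \<subseteq> E"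
    unfolding quot_dim_one_def by blast
  have xE: "x \<notin> E"
  proof
    assume "x \<in> E"
    then have "X \<subseteq> E" using qdo_gen[OF qX sE ME] x by blast
    then show False using qdo_sub[OF qE qX] False by blast
  qed
  define d where "d = e - x"
  define S0 where "S0 = {m + scale b d | m b. m \<in> M}"
  have sS0: "subspace scale S0" unfolding S0_def by (rule line_sub[OF sM])
  have xS0: "x \<notin> S0"
  proof
    assume "x \<in> S0"
    then obtain m b where mb: "m \<in> M" "x = m + scale b d" unfolding S0_def by blast
    have eq: "scale (1 + b) x = m + scale b e"
      using mb(2) aux_eq unfolding d_def by blast
    show False
    proof (cases "1 + b = 0")
      case True
      then have "b = -1" by (metis add.commute eq_neg_iff_add_eq_0)
      then have "m - e = 0" using eq True by (simp add: scale_minus_left scale_one)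
      then show False using mb e by simp
    next
      case nz: False
      have "m + scale b e \<in> E" using mb ME subadd[OF sE] subscale[OF sE e(1)] by blast
      then have "scale (inverse (1 + b)) (scale (1 + b) x) \<in> E" using eq subscale[OF sE] by simp
      then show False using inv_scale[OF nz] xE by simp
    qed
  qed
  obtain S where sS: "subspace scale S" and S0S: "S0 \<subseteq> S" and xS: "x \<notin> S"
    and hyp: "\<forall>v. \<exists>a. v - scale a x \<in> S"
    using hyperplane_exists[OF sS0 xS0] by blast
  define lam where "lam v = (THE a. v - scale a x \<in> S)" for v
  have uniq: "a = a'" if "v - scale a x \<in> S" "v - scale a' x \<in> S" for v a a'
  proof (rule ccontr)
    assume ne: "a \<noteq> a'"
    have "(v - scale a x) - (v - scale a' x) \<in> S" using subdiff[OF sS that] .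
    then have "scale (a' - a) x \<in> S" by (simp add: scale_diff_left)
    then have "scale (inverse (a' - a)) (scale (a' - a) x) \<in> S" using subscale[OF sS] by blast
    then show False using inv_scale[of "a' - a" x] ne xS by simp
  qed
  have lam_char: "lam v = a" if "v - scale a x \<in> S" for v a
    unfolding lam_def using that uniq by blast
  have lam_mem: "v - scale (lam v) x \<in> S" for v
  proof -
    obtain a where "v - scale a x \<in> S" using hyp by blast
    then show ?thesis using lam_char by simp
  qed
  have dS: "d \<in> S" using S0S sub0[OF sM] unfolding S0_def
    by (force intro: exI[of _ 0] exI[of _ "1::'k"] simp: scale_one)
  have MS: "M \<subseteq> S" using S0S unfolding S0_def by (force intro: exI[of _ "0::'k"])
  define tau where "tau u = u + scale (lam u) d" for u
  define sig where "sig u = u - scale (lam u) d" for u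
  have lam_tau: "lam (tau u) = lam u" for u
  proof (rule lam_char)
    have eqq: "tau u - scale (lam u) x = (u - scale (lam u) x) + scale (lam u) d" unfolding tau_def by simp
    show "tau u - scale (lam u) x \<in> S" unfolding eqq using subadd[OF sS lam_mem subscale[OF sS dS]] .
  qed
  have lam_sig: "lam (sig u) = lam u" for u
  proof (rule lam_char)
    have eqq: "sig u - scale (lam u) x = (u - scale (lam u) x) - scale (lam u) d" unfolding sig_def by simp
    show "sig u - scale (lam u) x \<in> S" unfolding eqq using subdiff[OF sS lam_mem subscale[OF sS dS]] .
  qed
  have inv1: "sig (tau u) = u" for u unfolding sig_def using lam_tau by (simp add: tau_def)
  have inv2: "tau (sig u) = u" for u unfolding tau_def using lam_sig by (simp add: sig_def)
  have lam_add: "lam (u + w) = lam u + lam w" for u w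
  proof (rule lam_char)
    have eqq: "u + w - scale (lam u + lam w) x = (u - scale (lam u) x) + (w - scale (lam w) x)"
      by (simp add: scale_left_distrib algebra_simps)
    show "u + w - scale (lam u + lam w) x \<in> S" unfolding eqq using subadd[OF sS lam_mem lam_mem] .
  qed
  have lam_sc: "lam (scale c u) = c * lam u" for c u
  proof (rule lam_char)
    have eqq: "scale c u - scale (c * lam u) x = scale c (u - scale (lam u) x)"
      by (simp add: scale_diff_right scale_scale)
    show "scale c u - scale (c * lam u) x \<in> S" unfolding eqq using subscale[OF sS lam_mem] .
  qed
  have tadd: "tau (u + w) = tau u + tau w" for u w
    unfolding tau_def lam_add by (simp add: scale_left_distrib algebra_simps)
  have thom: "tau (scale c u) = scale c (tau u)" for c u
    unfolding tau_def lam_sc by (simp add: scale_right_distrib scale_scale)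
  have img: "tau ` X = E"
  proof
    show "tau ` X \<subseteq> E"
    proof
      fix y assume "y \<in> tau ` X"
      then obtain u where u: "u \<in> X" "y = tau u" by blast
      then obtain m a where ma: "m \<in> M" "u = m + scale a x" using x(3) by blast
      have "lam u = a" using ma MS by (intro lam_char) auto
      then have "y = m + scale a e" using u ma
        by (simp add: tau_def d_def scale_diff_right)
      then show "y \<in> E" using e(3) ma by blast
    qed
  next
    show "E \<subseteq> tau ` X"
    proof
      fix y assume "y \<in> E"
      then obtain m a where ma: "m \<in> M" "y = m + scale a e" using e(3) by blast
      define u where "u = m + scale a x"
      have uX: "u \<in> X" unfolding u_def using x(3) ma by blast
      have "lam u = a" using ma MS unfolding u_def by (intro lam_char) auto
      then have "tau u = y" using ma unfolding u_def
        by (simp add: tau_def d_def scale_diff_right)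
      then show "y \<in> tau ` X" using uX by blast
    qed
  qed
  have "iso_to_quot scale X" using XG unfolding Gr_def by blast
  then have "iso_to_quot scale E" using transfer[OF sX sE tadd thom inv1 inv2 img] by blast
  then show ?thesis unfolding Gr_def using sE by blast
qed

end

theorem lemma2p1:
  fixes scale :: "'k::division_ring \<Rightarrow> 'v::ab_group_add \<Rightarrow> 'v"
    and M :: "'v set"
  assumes "left_vector_space scale"
    and "dim_gt_2 scale"
    and "Gr scale \<noteq> {}"
    and "subspace scale M"
    and "\<exists>X\<in>Gr scale. M \<subseteq> X \<and> quot_dim_one scale X M"
  shows "star scale M \<subseteq> Gr scale
    \<and> (\<forall>E\<in>star scale M. \<forall>E'\<in>star scale M. E \<noteq> E' \<longrightarrow> adjacent scale E E')
    \<and> (\<forall>E\<in>Gr scale. \<forall>E'\<in>Gr scale. adjacent scale E E' \<longrightarrow>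
           ((E \<in> star scale M \<and> E' \<in> star scale M) \<longleftrightarrow> E \<inter> E' = M))"
proof -
  interpret left_vector_space scale by (rule assms(1))
  from assms(5) obtain X where X: "X \<in> Gr scale" "quot_dim_one scale X M" by blast
  have 1: "star scale M \<subseteq> Gr scale"
    using star_in_Gr[OF X] unfolding star_def by blast
  have 2: "\<forall>E\<in>star scale M. \<forall>E'\<in>star scale M. E \<noteq> E' \<longrightarrow> adjacent scale E E'"
    using star_adj by blast
  have 3: "\<forall>E\<in>Gr scale. \<forall>E'\<in>Gr scale. adjacent scale E E' \<longrightarrow>
           ((E \<in> star scale M \<and> E' \<in> star scale M) \<longleftrightarrow> E \<inter> E' = M)"
    using part3[OF _ _ assms(4)] unfolding Gr_def by blast
  show ?thesis using 1 2 3 by blast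
qed

end
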